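(* Let $t\in[n]$, let $S\subseteq N$ be $t$-switchable, let $a\in S$ and $b\in N$. Let $L\subseteq[t]$ be such that ${\rm s}(l,a,b)\in S$ for all $l\in L$. Then ${\rm s}(L,a,b)\in S$.
   Context: Fix positive integers $n, r_1,\dots,r_n$ and let $N=[r_1]\times\cdots\times[r_n]$. For $L\subseteq[n]$ and $a,b\in N$, ${\rm s}(L,a,b)\in N$ has $i$-th component $b_i$ if $i\in L$ and $a_i$ otherwise; ${\rm s}(l,a,b)={\rm s}(\{l\},a,b)$. Let $d(a,b)=\#\{j: a_j\neq b_j\}$. A subset $S\subseteq N$ is $t$-switchable if for all $a,b\in S$ with $d(a,b)=2$ and all $i\in[t]$, ${\rm s}(i,a,b)\in S$. *)

theory Defs
  imports "HOL-Library.FuncSet"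
begin

definition grid :: "nat \<Rightarrow> (nat \<Rightarrow> nat) \<Rightarrow> (nat \<Rightarrow> nat) set" where
  "grid n r = PiE {1..n} (\<lambda>i. {1..r i})"

definition sw :: "nat set \<Rightarrow> (nat \<Rightarrow> nat) \<Rightarrow> (nat \<Rightarrow> nat) \<Rightarrow> (nat \<Rightarrow> nat)" where
  "sw L a b = (\<lambda>i. if i \<in> L then b i else a i)"

definition hdist :: "nat \<Rightarrow> (nat \<Rightarrow> nat) \<Rightarrow> (nat \<Rightarrow> nat) \<Rightarrow> nat" where
  "hdist n a b = card {j \<in> {1..n}. a j \<noteq> b j}"

definition switchable :: "nat \<Rightarrow> (nat \<Rightarrow> nat) \<Rightarrow> nat \<Rightarrow> (nat \<Rightarrow> nat) set \<Rightarrow> bool" where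
  "switchable n r t S \<longleftrightarrow> S \<subseteq> grid n r \<and>
     (\<forall>a\<in>S. \<forall>b\<in>S. hdist n a b = 2 \<longrightarrow> (\<forall>i\<in>{1..t}. sw {i} a b \<in> S))"

end

theory Submission
  imports Defs
begin

theorem lemma3p2:
  fixes n t :: nat and r :: "nat \<Rightarrow> nat" and S :: "(nat \<Rightarrow> nat) set"
    and a b :: "nat \<Rightarrow> nat" and L :: "nat set"
  assumes "\<forall>i\<in>{1..n}. r i \<ge> 1"
    and "t \<in> {1..n}"
    and "switchable n r t S"
    and "a \<in> S" and "b \<in> grid n r"
    and "L \<subseteq> {1..t}"
    and "\<forall>l\<in>L. sw {l} a b \<in> S"
  shows "sw L a b \<in> S"
proof -
  have tn: "t \<le> n" using assms(2) by simp
  have swS: "\<And>x y i. x \<in> S \<Longrightarrow> y \<in> S \<Longrightarrow> hdist n x y = 2 \<Longrightarrow> i \<in> {1..t} \<Longrightarrow> sw {i} x y \<in> S"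
    using assms(3) unfolding switchable_def by blast
  have "\<forall>L. card L = m \<longrightarrow> L \<subseteq> {1..t} \<longrightarrow> (\<forall>l\<in>L. sw {l} a b \<in> S) \<longrightarrow> sw L a b \<in> S" for m
  proof (induction m rule: less_induct)
    case (less m)
    show ?case
    proof (intro allI impI)
      fix L :: "nat set"
      assume cL: "card L = m" and Lt: "L \<subseteq> {1..t}" and Ls: "\<forall>l\<in>L. sw {l} a b \<in> S"
      have fin: "finite L" using Lt finite_subset by blast
      show "sw L a b \<in> S"
      proof (cases "card L \<le> 1")
        case True
        then have "L = {} \<or> (\<exists>l. L = {l})" using fin
          by (metis One_nat_def card_0_eq card_1_singletonE le_Suc_eq le_zero_eq)
        then show ?thesis
        proof
          assume "L = {}"
          then have "sw L a b = a" unfolding sw_def by auto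
          then show ?thesis using assms(4) by simp
        next
          assume "\<exists>l. L = {l}" then show ?thesis using Ls by auto
        qed
      next
        case False
        then obtain l1 l2 where l: "l1 \<in> L" "l2 \<in> L" "l1 \<noteq> l2"
          using card_le_Suc0_iff_eq[OF fin] by auto
        define x where "x = sw (L - {l1}) a b"
        define y where "y = sw (L - {l2}) a b"
        have IH: "\<And>K. K \<subseteq> L \<Longrightarrow> card K < m \<Longrightarrow> sw K a b \<in> S"
          using less Lt Ls by blast
        have xS: "x \<in> S" unfolding x_def
          using IH[of "L - {l1}"] l fin cL False by (simp add: card_Diff1_less)
        have yS: "y \<in> S" unfolding y_def
          using IH[of "L - {l2}"] l fin cL False by (simp add: card_Diff1_less)
        show ?thesis
        proof (cases "a l1 = b l1")
          case True
          have "sw L a b = x" unfolding x_def sw_def using True by (auto simp: fun_eq_iff)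
          then show ?thesis using xS by simp
        next
          case F1: False
          show ?thesis
          proof (cases "a l2 = b l2")
            case True
            have "sw L a b = y" unfolding y_def sw_def using True by (auto simp: fun_eq_iff)
            then show ?thesis using yS by simp
          next
            case F2: False
            have l1n: "l1 \<in> {1..n}" and l2n: "l2 \<in> {1..n}" and l1t: "l1 \<in> {1..t}"
              using l Lt tn by auto
            have "{j \<in> {1..n}. x j \<noteq> y j} = {l1, l2}"
              using l1n l2n l F1 F2 unfolding x_def y_def sw_def by auto
            then have "hdist n x y = 2" unfolding hdist_def using l by simp
            then have "sw {l1} x y \<in> S" using swS xS yS l1t by blast
            moreover have "sw {l1} x y = sw L a b"
              unfolding x_def y_def sw_def using l by (auto simp: fun_eq_iff)
            ultimately show ?thesis by simp
          qed
        qed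
      qed
    qed
  qed
  then show ?thesis using assms(6,7) by blast
qed

end
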